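(* Let $G=(V,E)$ be a simple graph with $V=\{1,\dots,n\}$ and let $\mathrm{SOL}(G)$ be the solution set of $\mathrm{LCP}(A+I,-\mathbf{e})$. Then: (a) $0\notin\mathrm{SOL}(G)$; (b) $(A+I)x\geq x$ for all $x\in\mathrm{SOL}(G)$; (c) $\mathrm{SOL}(G)\subseteq[0,1]^n$; (d) if $G$ is the disjoint union of graphs $G_1$ and $G_2$ (no edges between them), then, ordering coordinates so that those of $G_1$ come first, $\mathrm{SOL}(G)=\mathrm{SOL}(G_1)\times\mathrm{SOL}(G_2)$; (e) if $x\in\mathrm{SOL}(G)$, then $\sigma(x)$ is a dominating set of $G$; (f) if $x\in\mathrm{SOL}(G)$, then the subvector $\hat x:=x_{\sigma(x)}$ belongs to $\mathrm{SOL}(G_{\sigma(x)})$ and $\sigma(\hat x)=V(G_{\sigma(x)})$.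
   Context: $A$ is the adjacency matrix of $G$, $I$ the $n\times n$ identity and $\mathbf{e}$ the all-ones vector. $x$ solves $\mathrm{LCP}(A+I,-\mathbf{e})$ iff $x\geq 0$, $(A+I)x\geq\mathbf{e}$ and $x^\top((A+I)x-\mathbf{e})=0$. For a graph $H$, $\mathrm{SOL}(H)$ denotes the solution set of $\mathrm{LCP}(A_H+I,-\mathbf{e})$ with $A_H$ its adjacency matrix. The support of $x$ is $\sigma(x):=\{i\in V\mid x_i>0\}$. For $S\subseteq V$, $G_S$ is the subgraph induced by $S$ and $x_S$ the subvector of $x$ indexed by $S$. A set $S\subseteq V$ is dominating if every vertex outside $S$ has a neighbour in $S$. *)

theory Defs
  imports Complex_Main
begin

text \<open>Vectors indexed by V are functions nat => real that vanish outside V.\<close>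

definition simple_graph :: "nat set \<Rightarrow> (nat \<Rightarrow> nat \<Rightarrow> bool) \<Rightarrow> bool" where
  "simple_graph V E \<longleftrightarrow> finite V \<and> (\<forall>i j. E i j \<longrightarrow> E j i) \<and> (\<forall>i. \<not> E i i)
     \<and> (\<forall>i j. E i j \<longrightarrow> i \<in> V \<and> j \<in> V)"

definition adj :: "(nat \<Rightarrow> nat \<Rightarrow> bool) \<Rightarrow> nat \<Rightarrow> nat \<Rightarrow> real" where
  "adj E i j = (if E i j then 1 else 0)"

definition adjI :: "(nat \<Rightarrow> nat \<Rightarrow> bool) \<Rightarrow> nat \<Rightarrow> nat \<Rightarrow> real" where
  "adjI E i j = adj E i j + (if i = j then 1 else 0)"

text \<open>Matrix-vector product ((A_H + I) x)_i for the graph H with vertex set S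
(the induced subgraph of E on S).\<close>
definition mulv :: "nat set \<Rightarrow> (nat \<Rightarrow> nat \<Rightarrow> bool) \<Rightarrow> (nat \<Rightarrow> real) \<Rightarrow> nat \<Rightarrow> real" where
  "mulv S E x i = (\<Sum>j\<in>S. adjI E i j * x j)"

definition SOL :: "nat set \<Rightarrow> (nat \<Rightarrow> nat \<Rightarrow> bool) \<Rightarrow> (nat \<Rightarrow> real) set" where
  "SOL S E = {x. (\<forall>i. i \<notin> S \<longrightarrow> x i = 0)
                 \<and> (\<forall>i\<in>S. 0 \<le> x i)
                 \<and> (\<forall>i\<in>S. mulv S E x i \<ge> 1)
                 \<and> (\<Sum>i\<in>S. x i * (mulv S E x i - 1)) = 0}"

definition supp :: "nat set \<Rightarrow> (nat \<Rightarrow> real) \<Rightarrow> nat set" where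
  "supp S x = {i \<in> S. x i > 0}"

definition dominating :: "nat set \<Rightarrow> (nat \<Rightarrow> nat \<Rightarrow> bool) \<Rightarrow> nat set \<Rightarrow> bool" where
  "dominating V E D \<longleftrightarrow> D \<subseteq> V \<and> (\<forall>v \<in> V - D. \<exists>u \<in> D. E v u)"

definition restr :: "nat set \<Rightarrow> (nat \<Rightarrow> real) \<Rightarrow> nat \<Rightarrow> real" where
  "restr S x = (\<lambda>i. if i \<in> S then x i else 0)"

end

theory Submission
  imports Defs
begin

lemma adjI_nonneg: "adjI E i j \<ge> 0"
  by (simp add: adjI_def adj_def)

lemma SOL_D:
  assumes "x \<in> SOL S E"
  shows "\<And>i. i \<notin> S \<Longrightarrow> x i = 0" "\<And>i. i \<in> S \<Longrightarrow> 0 \<le> x i"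
    "\<And>i. i \<in> S \<Longrightarrow> mulv S E x i \<ge> 1" "(\<Sum>i\<in>S. x i * (mulv S E x i - 1)) = 0"
  using assms by (auto simp: SOL_def)

lemma compl:
  assumes "x \<in> SOL S E" "finite S" "i \<in> S"
  shows "x i * (mulv S E x i - 1) = 0"
proof -
  have "\<forall>i\<in>S. x i * (mulv S E x i - 1) = 0"
    using sum_nonneg_eq_0_iff[OF assms(2), of "\<lambda>i. x i * (mulv S E x i - 1)"]
      SOL_D[OF assms(1)] by auto
  thus ?thesis using assms(3) by auto
qed

lemma mulv_ge:
  assumes "finite S" "\<forall>j\<in>S. 0 \<le> x j" "i \<in> S" "\<not> E i i"
  shows "mulv S E x i \<ge> x i"
proof -
  have "adjI E i i * x i \<le> (\<Sum>j\<in>S. adjI E i j * x j)"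
    by (rule member_le_sum) (use assms adjI_nonneg in auto)
  moreover have "adjI E i i = 1" using assms(4) by (simp add: adjI_def adj_def)
  ultimately show ?thesis by (simp add: mulv_def)
qed

lemma mulv_sub:
  assumes "finite S" "D \<subseteq> S" "\<forall>j\<in>S-D. x j = 0"
  shows "mulv S E x i = mulv D E x i"
  unfolding mulv_def
  by (rule sum.mono_neutral_right[OF assms(1,2)]) (use assms(3) in auto)

lemma mulv_cong:
  assumes "\<forall>j\<in>S. x j = y j"
  shows "mulv S E x i = mulv S E y i"
  unfolding mulv_def using assms by (auto intro: sum.cong)

lemma mulv_split:
  assumes "finite V1" "finite V2" "V1 \<inter> V2 = {}" "i \<in> V1"
    "\<forall>j\<in>V2. \<not> E i j"
  shows "mulv (V1 \<union> V2) E x i = mulv V1 E x i"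
proof -
  have "mulv (V1 \<union> V2) E x i = mulv V1 E x i + mulv V2 E x i"
    unfolding mulv_def by (rule sum.union_disjoint) (use assms in auto)
  moreover have "mulv V2 E x i = 0"
    unfolding mulv_def using assms by (auto simp: adjI_def adj_def intro!: sum.neutral)
  ultimately show ?thesis by simp
qed

theorem lemma1:
  fixes n :: nat and E :: "nat \<Rightarrow> nat \<Rightarrow> bool"
  assumes "n \<ge> 1" and G: "simple_graph {1..n} E"
  shows "(\<lambda>i. 0) \<notin> SOL {1..n} E
    \<and> (\<forall>x\<in>SOL {1..n} E. \<forall>i\<in>{1..n}. mulv {1..n} E x i \<ge> x i)
    \<and> (\<forall>x\<in>SOL {1..n} E. \<forall>i\<in>{1..n}. 0 \<le> x i \<and> x i \<le> 1)
    \<and> (\<forall>V1 V2. V1 \<union> V2 = {1..n} \<longrightarrow> V1 \<inter> V2 = {} \<longrightarrow>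
           (\<forall>i\<in>V1. \<forall>j\<in>V2. \<not> E i j) \<longrightarrow>
           bij_betw (\<lambda>x. (restr V1 x, restr V2 x)) (SOL {1..n} E) (SOL V1 E \<times> SOL V2 E))
    \<and> (\<forall>x\<in>SOL {1..n} E. dominating {1..n} E (supp {1..n} x))
    \<and> (\<forall>x\<in>SOL {1..n} E. restr (supp {1..n} x) x \<in> SOL (supp {1..n} x) E
           \<and> supp (supp {1..n} x) (restr (supp {1..n} x) x) = supp {1..n} x)"
proof -
  let ?V = "{1..n::nat}"
  have fin: "finite ?V" by simp
  have irr: "\<And>i. \<not> E i i" and sym: "\<And>i j. E i j \<Longrightarrow> E j i"
    and inV: "\<And>i j. E i j \<Longrightarrow> i \<in> ?V \<and> j \<in> ?V"
    using G by (auto simp: simple_graph_def)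
  have A: "(\<lambda>i. 0) \<notin> SOL ?V E"
  proof
    assume "(\<lambda>i. 0) \<in> SOL ?V E"
    hence "mulv ?V E (\<lambda>i. 0) 1 \<ge> 1" using assms(1) by (auto simp: SOL_def)
    thus False by (simp add: mulv_def)
  qed
  have B: "\<forall>x\<in>SOL ?V E. \<forall>i\<in>?V. mulv ?V E x i \<ge> x i"
    using mulv_ge[OF fin] SOL_D(2) irr by blast
  have C: "\<forall>x\<in>SOL ?V E. \<forall>i\<in>?V. 0 \<le> x i \<and> x i \<le> 1"
  proof (intro ballI)
    fix x i assume x: "x \<in> SOL ?V E" and i: "i \<in> ?V"
    have 0: "0 \<le> x i" using SOL_D(2)[OF x i] .
    have "x i \<le> 1"
    proof (cases "x i = 0")
      case False
      hence "mulv ?V E x i = 1" using compl[OF x fin i] by simp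
      thus ?thesis using B x i by force
    qed simp
    with 0 show "0 \<le> x i \<and> x i \<le> 1" by simp
  qed
  have D: "\<forall>V1 V2. V1 \<union> V2 = ?V \<longrightarrow> V1 \<inter> V2 = {} \<longrightarrow>
           (\<forall>i\<in>V1. \<forall>j\<in>V2. \<not> E i j) \<longrightarrow>
           bij_betw (\<lambda>x. (restr V1 x, restr V2 x)) (SOL ?V E) (SOL V1 E \<times> SOL V2 E)"
  proof (intro allI impI)
    fix V1 V2 assume U: "V1 \<union> V2 = ?V" and I: "V1 \<inter> V2 = {}"
      and NE: "\<forall>i\<in>V1. \<forall>j\<in>V2. \<not> E i j"
    have fU: "finite (V1 \<union> V2)" using U by simp
    have f1: "finite V1" and f2: "finite V2" using fU by auto
    have NE2: "\<forall>i\<in>V2. \<forall>j\<in>V1. \<not> E i j" using NE sym by blast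
    have m1: "mulv ?V E x i = mulv V1 E x i" if i: "i \<in> V1" for x i
    proof -
      have "mulv (V1 \<union> V2) E x i = mulv V1 E x i"
        by (rule mulv_split[OF f1 f2 I i]) (use NE i in blast)
      thus ?thesis by (simp only: U)
    qed
    have I2: "V2 \<inter> V1 = {}" using I by blast
    have m2: "mulv ?V E x i = mulv V2 E x i" if i: "i \<in> V2" for x i
    proof -
      have "mulv (V2 \<union> V1) E x i = mulv V2 E x i"
        by (rule mulv_split[OF f2 f1 I2 i]) (use NE2 i in blast)
      moreover have "V2 \<union> V1 = ?V" using U by blast
      ultimately show ?thesis by simp
    qed
    have sub: "\<And>x W. x \<in> SOL ?V E \<Longrightarrow> W = V1 \<or> W = V2 \<Longrightarrow> restr W x \<in> SOL W E"
    proof -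
      fix x W assume x: "x \<in> SOL ?V E" and W: "W = V1 \<or> W = V2"
      have fW: "finite W" using W f1 f2 by auto
      have WV: "W \<subseteq> ?V" using W U by auto
      have mW: "\<And>i. i \<in> W \<Longrightarrow> mulv W E (restr W x) i = mulv ?V E x i"
      proof -
        fix i assume i: "i \<in> W"
        have "mulv W E (restr W x) i = mulv W E x i"
          by (rule mulv_cong) (simp add: restr_def)
        thus "mulv W E (restr W x) i = mulv ?V E x i" using W i m1 m2 by auto
      qed
      show "restr W x \<in> SOL W E"
        unfolding SOL_def
      proof (intro CollectI conjI ballI allI impI)
        show "\<And>i. i \<notin> W \<Longrightarrow> restr W x i = 0" by (simp add: restr_def)
        show "\<And>i. i \<in> W \<Longrightarrow> 0 \<le> restr W x i" using SOL_D(2)[OF x] WV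
          by (auto simp: restr_def)
        show "\<And>i. i \<in> W \<Longrightarrow> 1 \<le> mulv W E (restr W x) i" using mW SOL_D(3)[OF x] WV
          by auto
        show "(\<Sum>i\<in>W. restr W x i * (mulv W E (restr W x) i - 1)) = 0"
          using mW compl[OF x fin] WV by (auto simp: restr_def intro!: sum.neutral)
      qed
    qed
    show "bij_betw (\<lambda>x. (restr V1 x, restr V2 x)) (SOL ?V E) (SOL V1 E \<times> SOL V2 E)"
      unfolding bij_betw_def
    proof (intro conjI)
      show "inj_on (\<lambda>x. (restr V1 x, restr V2 x)) (SOL ?V E)"
      proof (rule inj_onI)
        fix x y assume x: "x \<in> SOL ?V E" and y: "y \<in> SOL ?V E"
          and e: "(restr V1 x, restr V2 x) = (restr V1 y, restr V2 y)"
        show "x = y"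
        proof
          fix i
          show "x i = y i"
          proof (cases "i \<in> ?V")
            case True
            have e1: "restr V1 x = restr V1 y" and e2: "restr V2 x = restr V2 y" using e by simp_all
            from True U have "i \<in> V1 \<or> i \<in> V2" by blast
            then show ?thesis
            proof
              assume "i \<in> V1" thus ?thesis using fun_cong[OF e1, of i] by (simp add: restr_def)
            next
              assume "i \<in> V2" thus ?thesis using fun_cong[OF e2, of i] by (simp add: restr_def)
            qed
          next
            case False
            then show ?thesis using SOL_D(1)[OF x] SOL_D(1)[OF y] by simp
          qed
        qed
      qed
      show "(\<lambda>x. (restr V1 x, restr V2 x)) ` SOL ?V E = SOL V1 E \<times> SOL V2 E"
      proof
        show "(\<lambda>x. (restr V1 x, restr V2 x)) ` SOL ?V E \<subseteq> SOL V1 E \<times> SOL V2 E"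
          using sub by auto
        show "SOL V1 E \<times> SOL V2 E \<subseteq> (\<lambda>x. (restr V1 x, restr V2 x)) ` SOL ?V E"
        proof clarify
          fix y z assume y: "y \<in> SOL V1 E" and z: "z \<in> SOL V2 E"
          define x where "x = (\<lambda>i. if i \<in> V1 then y i else z i)"
          have xy: "\<forall>j\<in>V1. x j = y j" by (simp add: x_def)
          have xz: "\<forall>j\<in>V2. x j = z j" using I by (auto simp: x_def)
          have mx1: "\<And>i. i \<in> V1 \<Longrightarrow> mulv ?V E x i = mulv V1 E y i"
            using m1 mulv_cong[OF xy] by metis
          have mx2: "\<And>i. i \<in> V2 \<Longrightarrow> mulv ?V E x i = mulv V2 E z i"
            using m2 mulv_cong[OF xz] by metis
          have xS: "x \<in> SOL ?V E"
            unfolding SOL_def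
          proof (intro CollectI conjI ballI allI impI)
            show "\<And>i. i \<notin> ?V \<Longrightarrow> x i = 0"
              using SOL_D(1)[OF y] SOL_D(1)[OF z] U by (auto simp: x_def)
            show "\<And>i. i \<in> ?V \<Longrightarrow> 0 \<le> x i"
              using SOL_D(2)[OF y] SOL_D(2)[OF z] U by (auto simp: x_def)
            show "1 \<le> mulv ?V E x i" if i: "i \<in> ?V" for i
            proof -
              from i U have "i \<in> V1 \<or> i \<in> V2" by blast
              thus ?thesis using SOL_D(3)[OF y] SOL_D(3)[OF z] mx1 mx2 by auto
            qed
            have "(\<Sum>i\<in>?V. x i * (mulv ?V E x i - 1))
                = (\<Sum>i\<in>V1. x i * (mulv ?V E x i - 1)) + (\<Sum>i\<in>V2. x i * (mulv ?V E x i - 1))"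
              unfolding U[symmetric] by (rule sum.union_disjoint[OF f1 f2 I])
            also have "(\<Sum>i\<in>V1. x i * (mulv ?V E x i - 1)) = (\<Sum>i\<in>V1. y i * (mulv V1 E y i - 1))"
              using xy mx1 by (auto intro: sum.cong)
            also have "(\<Sum>i\<in>V2. x i * (mulv ?V E x i - 1)) = (\<Sum>i\<in>V2. z i * (mulv V2 E z i - 1))"
              using xz mx2 by (auto intro: sum.cong)
            finally show "(\<Sum>i\<in>?V. x i * (mulv ?V E x i - 1)) = 0"
              using SOL_D(4)[OF y] SOL_D(4)[OF z] by simp
          qed
          have "restr V1 x = y" using SOL_D(1)[OF y]
            by (auto simp: restr_def x_def fun_eq_iff)
          moreover have "restr V2 x = z" using SOL_D(1)[OF z] I
            by (auto simp: restr_def x_def fun_eq_iff)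
          ultimately show "(y, z) \<in> (\<lambda>x. (restr V1 x, restr V2 x)) ` SOL ?V E"
            using xS by force
        qed
      qed
    qed
  qed
  have Ed: "\<forall>x\<in>SOL ?V E. dominating ?V E (supp ?V x)"
  proof
    fix x assume x: "x \<in> SOL ?V E"
    show "dominating ?V E (supp ?V x)"
      unfolding dominating_def
    proof (intro conjI ballI)
      show "supp ?V x \<subseteq> ?V" by (auto simp: supp_def)
      fix v assume v: "v \<in> ?V - supp ?V x"
      show "\<exists>u\<in>supp ?V x. E v u"
      proof (rule ccontr)
        assume no: "\<not> (\<exists>u\<in>supp ?V x. E v u)"
        have xv: "x v = 0" using v SOL_D(2)[OF x] by (force simp: supp_def)
        have "mulv ?V E x v = 0"
          unfolding mulv_def
        proof (rule sum.neutral, rule ballI)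
          fix j assume j: "j \<in> ?V"
          show "adjI E v j * x j = 0"
          proof (cases "j = v")
            case True thus ?thesis using xv by simp
          next
            case False
            show ?thesis
            proof (cases "E v j")
              case True
              hence "x j = 0" using no j SOL_D(2)[OF x] by (force simp: supp_def)
              thus ?thesis by simp
            qed (use False in \<open>simp add: adjI_def adj_def\<close>)
          qed
        qed
        thus False using SOL_D(3)[OF x] v by force
      qed
    qed
  qed
  have F: "\<forall>x\<in>SOL ?V E. restr (supp ?V x) x \<in> SOL (supp ?V x) E
           \<and> supp (supp ?V x) (restr (supp ?V x) x) = supp ?V x"
  proof
    fix x assume x: "x \<in> SOL ?V E"
    let ?D = "supp ?V x"
    have DV: "?D \<subseteq> ?V" by (auto simp: supp_def)
    have zero: "\<forall>j\<in>?V - ?D. x j = 0" using SOL_D(2)[OF x] by (force simp: supp_def)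
    have mD: "\<And>i. mulv ?D E (restr ?D x) i = mulv ?V E x i"
    proof -
      fix i
      have "mulv ?D E (restr ?D x) i = mulv ?D E x i"
        by (rule mulv_cong) (simp add: restr_def)
      also have "\<dots> = mulv ?V E x i" using mulv_sub[OF fin DV zero] by simp
      finally show "mulv ?D E (restr ?D x) i = mulv ?V E x i" .
    qed
    have one: "\<And>i. i \<in> ?D \<Longrightarrow> mulv ?V E x i = 1"
      using compl[OF x fin] DV by (force simp: supp_def)
    have "restr ?D x \<in> SOL ?D E"
      unfolding SOL_def
    proof (intro CollectI conjI ballI allI impI)
      show "\<And>i. i \<notin> ?D \<Longrightarrow> restr ?D x i = 0" by (simp add: restr_def)
      show "\<And>i. i \<in> ?D \<Longrightarrow> 0 \<le> restr ?D x i" by (auto simp: restr_def supp_def)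
      show "\<And>i. i \<in> ?D \<Longrightarrow> 1 \<le> mulv ?D E (restr ?D x) i" using mD one by simp
      show "(\<Sum>i\<in>?D. restr ?D x i * (mulv ?D E (restr ?D x) i - 1)) = 0"
        using mD one by (auto intro!: sum.neutral)
    qed
    moreover have "supp ?D (restr ?D x) = ?D"
      by (auto simp: supp_def restr_def)
    ultimately show "restr ?D x \<in> SOL ?D E \<and> supp ?D (restr ?D x) = ?D" by simp
  qed
  show ?thesis using A B C D Ed F by blast
qed

end
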